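(* Let $m,n\in\mathbb N$ with $m\ge 5$, $n\ge 4$ and $m-1\mid (n-3)$, and let $i\in\{1,2\}$. Then $r(T_m^i,T_n')=m+n-3$.
   Context: All graphs are finite and simple; a graph "contains" $H$ if it has a subgraph isomorphic to $H$. For graphs $G_1,G_2$, the Ramsey number $r(G_1,G_2)$ is the smallest positive integer $N$ such that for every graph $G$ on $N$ vertices, either $G$ contains a copy of $G_1$ or the complement $\overline G$ contains a copy of $G_2$. For $m\ge 5$, $T_m^1$ is the tree with vertex set $\{v_0,\ldots,v_{m-1}\}$ and edges $v_0v_1,\ldots,v_0v_{m-3},v_{m-4}v_{m-2},v_{m-3}v_{m-1}$, and $T_m^2$ is the tree on the same vertex set with edges $v_0v_1,\ldots,v_0v_{m-3},v_{m-3}v_{m-2},v_{m-3}v_{m-1}$. For $n\ge 4$, $T_n'$ is the unique (up to isomorphism) tree on $n$ vertices with maximum degree $n-2$. *)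

theory Defs
  imports Main
begin

(* A finite simple graph on vertex set {..<N} (vertices 0..N-1) is a symmetric,
   irreflexive relation E :: nat => nat => bool (only pairs inside {..<N} matter). *)
definition simple_graph :: "nat \<Rightarrow> (nat \<Rightarrow> nat \<Rightarrow> bool) \<Rightarrow> bool" where
  "simple_graph N E \<longleftrightarrow> (\<forall>x y. E x y \<longrightarrow> E y x) \<and> (\<forall>x. \<not> E x x)"

definition compl_graph :: "(nat \<Rightarrow> nat \<Rightarrow> bool) \<Rightarrow> nat \<Rightarrow> nat \<Rightarrow> bool" where
  "compl_graph E x y \<longleftrightarrow> x \<noteq> y \<and> \<not> E x y"

definition contains :: "nat \<Rightarrow> (nat \<Rightarrow> nat \<Rightarrow> bool) \<Rightarrow> nat \<Rightarrow> (nat \<Rightarrow> nat \<Rightarrow> bool) \<Rightarrow> bool" where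
  "contains N E k F \<longleftrightarrow> (\<exists>f. inj_on f {..<k} \<and> f ` {..<k} \<subseteq> {..<N} \<and>
      (\<forall>a<k. \<forall>b<k. F a b \<longrightarrow> E (f a) (f b)))"

definition ramsey_prop :: "nat \<Rightarrow> (nat \<Rightarrow> nat \<Rightarrow> bool) \<Rightarrow> nat \<Rightarrow> (nat \<Rightarrow> nat \<Rightarrow> bool) \<Rightarrow> nat \<Rightarrow> bool" where
  "ramsey_prop k1 F1 k2 F2 N \<longleftrightarrow>
     (\<forall>E. simple_graph N E \<longrightarrow> contains N E k1 F1 \<or> contains N (compl_graph E) k2 F2)"

definition ramsey_number :: "nat \<Rightarrow> (nat \<Rightarrow> nat \<Rightarrow> bool) \<Rightarrow> nat \<Rightarrow> (nat \<Rightarrow> nat \<Rightarrow> bool) \<Rightarrow> nat" where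
  "ramsey_number k1 F1 k2 F2 = (LEAST N. 0 < N \<and> ramsey_prop k1 F1 k2 F2 N)"

definition edges_rel :: "(nat \<times> nat) set \<Rightarrow> nat \<Rightarrow> nat \<Rightarrow> bool" where
  "edges_rel S a b \<longleftrightarrow> (a, b) \<in> S \<or> (b, a) \<in> S"

definition T1 :: "nat \<Rightarrow> nat \<Rightarrow> nat \<Rightarrow> bool" where
  "T1 m = edges_rel ({(0, j) | j. 1 \<le> j \<and> j \<le> m - 3} \<union> {(m - 4, m - 2), (m - 3, m - 1)})"

definition T2 :: "nat \<Rightarrow> nat \<Rightarrow> nat \<Rightarrow> bool" where
  "T2 m = edges_rel ({(0, j) | j. 1 \<le> j \<and> j \<le> m - 3} \<union> {(m - 3, m - 2), (m - 3, m - 1)})"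

(* T_n': tree on n vertices with maximum degree n-2 (unique up to isomorphism);
   representative: v0v1..v0v_{n-2}, v_{n-2}v_{n-1} *)
definition Tprime :: "nat \<Rightarrow> nat \<Rightarrow> nat \<Rightarrow> bool" where
  "Tprime n = edges_rel ({(0, j) | j. 1 \<le> j \<and> j \<le> n - 2} \<union> {(n - 2, n - 1)})"

definition Tmi :: "nat \<Rightarrow> nat \<Rightarrow> nat \<Rightarrow> nat \<Rightarrow> bool" where
  "Tmi i m = (if i = 1 then T1 m else T2 m)"

end

theory Submission
  imports Defs
begin


lemma pick_inj:
  assumes "finite S" "k \<le> card S"
  shows "\<exists>g. inj_on g {..<k} \<and> g ` {..<k} \<subseteq> S"
proof -
  obtain T where T: "T \<subseteq> S" "card T = k" "finite T"
    using obtain_subset_with_card_n[OF assms(2)] by blast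
  obtain h where "bij_betw h {0..<card T} T" using ex_bij_betw_nat_finite[OF T(3)] by blast
  then show ?thesis using T by (auto simp: bij_betw_def atLeast0LessThan)
qed

lemma embed_T1k:
  fixes E :: "nat \<Rightarrow> nat \<Rightarrow> bool"
  assumes sym: "\<forall>x y. E x y \<longrightarrow> E y x"
    and d: "distinct [c0,c1,c2,c3,c4]" and cN: "c0<N" "c1<N" "c2<N" "c3<N" "c4<N"
    and S: "finite S" "S \<subseteq> {..<N}" "k \<le> card S" "c0\<notin>S" "c1\<notin>S" "c2\<notin>S" "c3\<notin>S" "c4\<notin>S"
    and e: "E c0 c1" "E c0 c2" "\<forall>s\<in>S. E c0 s" "E c1 c3" "E c2 c4"
  shows "contains N E (k+5) (T1 (k+5))"
proof -
  obtain g where g: "inj_on g {..<k}" "g ` {..<k} \<subseteq> S" using pick_inj[OF S(1) S(3)] by blast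
  define f where "f j = (if j = 0 then c0 else if j = k+1 then c1 else if j = k+2 then c2
      else if j = k+3 then c3 else if j = k+4 then c4 else g (j - 1))" for j
  have gS: "1 \<le> j \<Longrightarrow> j \<le> k \<Longrightarrow> g (j-1) \<in> S" for j using g(2) by auto
  have cls: "j < k+5 \<Longrightarrow> j = 0 \<or> j = k+1 \<or> j = k+2 \<or> j = k+3 \<or> j = k+4 \<or> (1 \<le> j \<and> j \<le> k)" for j
    by auto
  have fl: "1 \<le> j \<Longrightarrow> j \<le> k \<Longrightarrow> f j = g (j-1)" for j by (simp add: f_def)
  have gi: "1\<le>a \<Longrightarrow> a\<le>k \<Longrightarrow> 1\<le>b \<Longrightarrow> b\<le>k \<Longrightarrow> g (a-1) = g (b-1) \<Longrightarrow> a = b" for a b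
  proof -
    assume h: "1\<le>a" "a\<le>k" "1\<le>b" "b\<le>k" "g (a-1) = g (b-1)"
    then have "a - 1 = b - 1" using inj_onD[OF g(1), of "a-1" "b-1"] by simp
    then show "a = b" using h by simp
  qed
  have inj: "inj_on f {..<k+5}"
  proof (rule inj_onI)
    fix a b assume a: "a \<in> {..<k+5}" and b: "b \<in> {..<k+5}" and fab: "f a = f b"
    from a b have ab: "a < k+5" "b < k+5" by auto
    from cls[OF ab(1)] cls[OF ab(2)] show "a = b"
    proof (elim disjE conjE)
    qed (use fab d gS[of a] gS[of b] S(4-8) gi[of a b] in \<open>auto simp add: f_def\<close>)
  qed
  have img: "f ` {..<k+5} \<subseteq> {..<N}"
  proof
    fix y assume "y \<in> f ` {..<k+5}"
    then obtain a where a: "a < k+5" "y = f a" by auto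
    from cls[OF a(1)] show "y \<in> {..<N}"
      by (elim disjE conjE) (insert a cN S gS fl, auto simp: f_def)
  qed
  have edge1: "E (f a) (f b)" if "(a,b) \<in> {(0, j) | j. 1 \<le> j \<and> j \<le> k+5 - 3} \<union> {(k+5 - 4, k+5 - 2), (k+5 - 3, k+5 - 1)}" for a b
  proof -
    have "(a = 0 \<and> 1 \<le> b \<and> b \<le> k) \<or> (a = 0 \<and> b = k+1) \<or> (a = 0 \<and> b = k+2) \<or> (a = k+1 \<and> b = k+3) \<or> (a = k+2 \<and> b = k+4)"
      using that by auto
    then show ?thesis by (elim disjE conjE) (insert e gS fl, auto simp: f_def)
  qed
  have edges: "\<forall>a<k+5. \<forall>b<k+5. T1 (k+5) a b \<longrightarrow> E (f a) (f b)"
    unfolding T1_def edges_rel_def using edge1 sym by blast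
  show ?thesis unfolding contains_def using inj img edges by blast
qed

lemma embed_T2k:
  fixes E :: "nat \<Rightarrow> nat \<Rightarrow> bool"
  assumes sym: "\<forall>x y. E x y \<longrightarrow> E y x"
    and d: "distinct [c0,c1,c2,c3,c4]" and cN: "c0<N" "c1<N" "c2<N" "c3<N" "c4<N"
    and S: "finite S" "S \<subseteq> {..<N}" "k \<le> card S" "c0\<notin>S" "c1\<notin>S" "c2\<notin>S" "c3\<notin>S" "c4\<notin>S"
    and e: "E c0 c1" "E c0 c2" "\<forall>s\<in>S. E c0 s" "E c2 c3" "E c2 c4"
  shows "contains N E (k+5) (T2 (k+5))"
proof -
  obtain g where g: "inj_on g {..<k}" "g ` {..<k} \<subseteq> S" using pick_inj[OF S(1) S(3)] by blast
  define f where "f j = (if j = 0 then c0 else if j = k+1 then c1 else if j = k+2 then c2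
      else if j = k+3 then c3 else if j = k+4 then c4 else g (j - 1))" for j
  have gS: "1 \<le> j \<Longrightarrow> j \<le> k \<Longrightarrow> g (j-1) \<in> S" for j using g(2) by auto
  have cls: "j < k+5 \<Longrightarrow> j = 0 \<or> j = k+1 \<or> j = k+2 \<or> j = k+3 \<or> j = k+4 \<or> (1 \<le> j \<and> j \<le> k)" for j
    by auto
  have fl: "1 \<le> j \<Longrightarrow> j \<le> k \<Longrightarrow> f j = g (j-1)" for j by (simp add: f_def)
  have gi: "1\<le>a \<Longrightarrow> a\<le>k \<Longrightarrow> 1\<le>b \<Longrightarrow> b\<le>k \<Longrightarrow> g (a-1) = g (b-1) \<Longrightarrow> a = b" for a b
  proof -
    assume h: "1\<le>a" "a\<le>k" "1\<le>b" "b\<le>k" "g (a-1) = g (b-1)"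
    then have "a - 1 = b - 1" using inj_onD[OF g(1), of "a-1" "b-1"] by simp
    then show "a = b" using h by simp
  qed
  have inj: "inj_on f {..<k+5}"
  proof (rule inj_onI)
    fix a b assume a: "a \<in> {..<k+5}" and b: "b \<in> {..<k+5}" and fab: "f a = f b"
    from a b have ab: "a < k+5" "b < k+5" by auto
    from cls[OF ab(1)] cls[OF ab(2)] show "a = b"
    proof (elim disjE conjE)
    qed (use fab d gS[of a] gS[of b] S(4-8) gi[of a b] in \<open>auto simp add: f_def\<close>)
  qed
  have img: "f ` {..<k+5} \<subseteq> {..<N}"
  proof
    fix y assume "y \<in> f ` {..<k+5}"
    then obtain a where a: "a < k+5" "y = f a" by auto
    from cls[OF a(1)] show "y \<in> {..<N}"
      by (elim disjE conjE) (insert a cN S gS fl, auto simp: f_def)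
  qed
  have edge1: "E (f a) (f b)" if "(a,b) \<in> {(0, j) | j. 1 \<le> j \<and> j \<le> k+5 - 3} \<union> {(k+5 - 3, k+5 - 2), (k+5 - 3, k+5 - 1)}" for a b
  proof -
    have "(a = 0 \<and> 1 \<le> b \<and> b \<le> k) \<or> (a = 0 \<and> b = k+1) \<or> (a = 0 \<and> b = k+2) \<or> (a = k+2 \<and> b = k+3) \<or> (a = k+2 \<and> b = k+4)"
      using that by auto
    then show ?thesis by (elim disjE conjE) (insert e gS fl, auto simp: f_def)
  qed
  have edges: "\<forall>a<k+5. \<forall>b<k+5. T2 (k+5) a b \<longrightarrow> E (f a) (f b)"
    unfolding T2_def edges_rel_def using edge1 sym by blast
  show ?thesis unfolding contains_def using inj img edges by blast
qed

lemma embed_Tpk: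
  fixes E :: "nat \<Rightarrow> nat \<Rightarrow> bool"
  assumes sym: "\<forall>x y. E x y \<longrightarrow> E y x"
    and d: "distinct [c0,c1,c2]" and cN: "c0<N" "c1<N" "c2<N"
    and S: "finite S" "S \<subseteq> {..<N}" "k+1 \<le> card S" "c0\<notin>S" "c1\<notin>S" "c2\<notin>S"
    and e: "E c0 c1" "\<forall>s\<in>S. E c0 s" "E c1 c2"
  shows "contains N E (k+4) (Tprime (k+4))"
proof -
  obtain g where g: "inj_on g {..<k+1}" "g ` {..<k+1} \<subseteq> S" using pick_inj[OF S(1) S(3)] by blast
  define f where "f j = (if j = 0 then c0 else if j = k+2 then c1 else if j = k+3 then c2
      else g (j - 1))" for j
  have gS: "1 \<le> j \<Longrightarrow> j \<le> k+1 \<Longrightarrow> g (j-1) \<in> S" for j using g(2) by auto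
  have cls: "j < k+4 \<Longrightarrow> j = 0 \<or> j = k+2 \<or> j = k+3 \<or> (1 \<le> j \<and> j \<le> k+1)" for j
    by auto
  have fl: "1 \<le> j \<Longrightarrow> j \<le> k+1 \<Longrightarrow> f j = g (j-1)" for j by (simp add: f_def)
  have gi: "1\<le>a \<Longrightarrow> a\<le>k+1 \<Longrightarrow> 1\<le>b \<Longrightarrow> b\<le>k+1 \<Longrightarrow> g (a-1) = g (b-1) \<Longrightarrow> a = b" for a b
  proof -
    assume h: "1\<le>a" "a\<le>k+1" "1\<le>b" "b\<le>k+1" "g (a-1) = g (b-1)"
    then have "a - 1 = b - 1" using inj_onD[OF g(1), of "a-1" "b-1"] by simp
    then show "a = b" using h by simp
  qed
  have inj: "inj_on f {..<k+4}"
  proof (rule inj_onI)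
    fix a b assume a: "a \<in> {..<k+4}" and b: "b \<in> {..<k+4}" and fab: "f a = f b"
    from a b have ab: "a < k+4" "b < k+4" by auto
    from cls[OF ab(1)] cls[OF ab(2)] show "a = b"
    proof (elim disjE conjE)
    qed (use fab d gS[of a] gS[of b] S(4-6) gi[of a b] in \<open>auto simp add: f_def\<close>)
  qed
  have img: "f ` {..<k+4} \<subseteq> {..<N}"
  proof
    fix y assume "y \<in> f ` {..<k+4}"
    then obtain a where a: "a < k+4" "y = f a" by auto
    from cls[OF a(1)] show "y \<in> {..<N}"
      by (elim disjE conjE) (insert a cN S gS fl, auto simp: f_def)
  qed
  have edge1: "E (f a) (f b)" if "(a,b) \<in> {(0, j) | j. 1 \<le> j \<and> j \<le> k+4 - 2} \<union> {(k+4 - 2, k+4 - 1)}" for a b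
  proof -
    have "(a = 0 \<and> 1 \<le> b \<and> b \<le> k+1) \<or> (a = 0 \<and> b = k+2) \<or> (a = k+2 \<and> b = k+3)"
      using that by auto
    then show ?thesis by (elim disjE conjE) (insert e gS fl, auto simp: f_def)
  qed
  have edges: "\<forall>a<k+4. \<forall>b<k+4. Tprime (k+4) a b \<longrightarrow> E (f a) (f b)"
    unfolding Tprime_def edges_rel_def using edge1 sym by blast
  show ?thesis unfolding contains_def using inj img edges by blast
qed



lemma embed_T1:
  fixes E :: "nat \<Rightarrow> nat \<Rightarrow> bool"
  assumes m: "m \<ge> 5" and sym: "\<forall>x y. E x y \<longrightarrow> E y x"
    and d: "distinct [c0,c1,c2,c3,c4]" and cN: "c0<N" "c1<N" "c2<N" "c3<N" "c4<N"
    and S: "finite S" "S \<subseteq> {..<N}" "m-5 \<le> card S" "c0\<notin>S" "c1\<notin>S" "c2\<notin>S" "c3\<notin>S" "c4\<notin>S"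
    and e: "E c0 c1" "E c0 c2" "\<forall>s\<in>S. E c0 s" "E c1 c3" "E c2 c4"
  shows "contains N E m (T1 m)"
proof -
  have "m = (m-5)+5" using m by simp
  then show ?thesis using embed_T1k[OF sym d cN S[unfolded] e] by metis
qed

lemma embed_T2:
  fixes E :: "nat \<Rightarrow> nat \<Rightarrow> bool"
  assumes m: "m \<ge> 5" and sym: "\<forall>x y. E x y \<longrightarrow> E y x"
    and d: "distinct [c0,c1,c2,c3,c4]" and cN: "c0<N" "c1<N" "c2<N" "c3<N" "c4<N"
    and S: "finite S" "S \<subseteq> {..<N}" "m-5 \<le> card S" "c0\<notin>S" "c1\<notin>S" "c2\<notin>S" "c3\<notin>S" "c4\<notin>S"
    and e: "E c0 c1" "E c0 c2" "\<forall>s\<in>S. E c0 s" "E c2 c3" "E c2 c4"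
  shows "contains N E m (T2 m)"
proof -
  have "m = (m-5)+5" using m by simp
  then show ?thesis using embed_T2k[OF sym d cN S[unfolded] e] by metis
qed

lemma embed_Tp:
  fixes E :: "nat \<Rightarrow> nat \<Rightarrow> bool"
  assumes n: "n \<ge> 4" and sym: "\<forall>x y. E x y \<longrightarrow> E y x"
    and d: "distinct [c0,c1,c2]" and cN: "c0<N" "c1<N" "c2<N"
    and S: "finite S" "S \<subseteq> {..<N}" "n-3 \<le> card S" "c0\<notin>S" "c1\<notin>S" "c2\<notin>S"
    and e: "E c0 c1" "\<forall>s\<in>S. E c0 s" "E c1 c2"
  shows "contains N E n (Tprime n)"
proof -
  have n': "n = (n-4)+4" "n-3 = (n-4)+1" using n by simp_all
  show ?thesis using embed_Tpk[OF sym d cN S(1,2) _ S(4-6) e, of "n-4"] S(3) n' by metis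
qed

definition nb :: "nat \<Rightarrow> (nat \<Rightarrow> nat \<Rightarrow> bool) \<Rightarrow> nat \<Rightarrow> nat set" where
  "nb N E v = {x. x < N \<and> E v x}"

lemma nb_sub: "nb N E v \<subseteq> {..<N}" and nb_fin: "finite (nb N E v)"
  unfolding nb_def by auto

lemma pick1: "1 \<le> card A \<Longrightarrow> \<exists>a. a \<in> A"
  by (metis One_nat_def card.empty ex_in_conv not_less_eq_eq zero_le)

lemma pick2: assumes "2 \<le> card A" shows "\<exists>a b. a \<in> A \<and> b \<in> A \<and> a \<noteq> b"
proof -
  obtain a where a: "a \<in> A" using pick1 assms by fastforce
  have "1 \<le> card (A - {a})" using assms a by (simp add: card_Diff_singleton_if)
  then obtain b where "b \<in> A - {a}" using pick1 by blast
  then show ?thesis using a by blast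
qed

lemma pick3: assumes "3 \<le> card A" shows "\<exists>a b c. a \<in> A \<and> b \<in> A \<and> c \<in> A \<and> a \<noteq> b \<and> a \<noteq> c \<and> b \<noteq> c"
proof -
  obtain a where a: "a \<in> A" using pick1 assms by fastforce
  have "2 \<le> card (A - {a})" using assms a by (simp add: card_Diff_singleton_if)
  then obtain b c where "b \<in> A - {a}" "c \<in> A - {a}" "b \<noteq> c" using pick2 by blast
  then show ?thesis using a by blast
qed

lemma card_diff_ge: "finite B \<Longrightarrow> card B \<le> j \<Longrightarrow> card A - j \<le> card (A - B)"
  using diff_card_le_card_Diff[of B A] by linarith

lemma card_set_le: "card {a,b} \<le> 2" "card {a,b,c} \<le> 3" "card {a,b,c,d} \<le> 4"
  using card_length[of "[a,b]"] card_length[of "[a,b,c]"] card_length[of "[a,b,c,d]"] by simp_all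

lemma deg_sum:
  assumes g: "simple_graph N E" and v: "v < N"
  shows "card (nb N E v) + card (nb N (compl_graph E) v) = N - 1"
proof -
  have un: "nb N E v \<union> nb N (compl_graph E) v = {..<N} - {v}"
    using g unfolding nb_def compl_graph_def simple_graph_def by auto
  have dj: "nb N E v \<inter> nb N (compl_graph E) v = {}"
    unfolding nb_def compl_graph_def by auto
  have "card (nb N E v) + card (nb N (compl_graph E) v) = card ({..<N} - {v})"
    using card_Un_disjoint[OF nb_fin nb_fin dj] un by simp
  also have "\<dots> = N - 1" using v by simp
  finally show ?thesis .
qed

lemma clique_contains:
  assumes K: "finite K" "K \<subseteq> {..<N}" "k \<le> card K" and cl: "\<forall>a\<in>K. \<forall>b\<in>K. a \<noteq> b \<longrightarrow> E a b"
    and F: "\<forall>a b. F a b \<longrightarrow> a \<noteq> b"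
  shows "contains N E k F"
proof -
  obtain g where g: "inj_on g {..<k}" "g ` {..<k} \<subseteq> K" using pick_inj[OF K(1) K(3)] by blast
  have "\<forall>a<k. \<forall>b<k. F a b \<longrightarrow> E (g a) (g b)"
  proof (intro allI impI)
    fix a b assume "a < k" "b < k" "F a b"
    then have "g a \<noteq> g b" "g a \<in> K" "g b \<in> K" using F g inj_onD[OF g(1), of a b] by auto
    then show "E (g a) (g b)" using cl by blast
  qed
  then show ?thesis unfolding contains_def using g K(2) by blast
qed

lemma T1_irr: "m \<ge> 5 \<Longrightarrow> \<forall>a b. T1 m a b \<longrightarrow> a \<noteq> b"
  unfolding T1_def edges_rel_def by auto
lemma T2_irr: "m \<ge> 5 \<Longrightarrow> \<forall>a b. T2 m a b \<longrightarrow> a \<noteq> b"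
  unfolding T2_def edges_rel_def by auto

lemma simple_sym: "simple_graph N E \<Longrightarrow> \<forall>x y. E x y \<longrightarrow> E y x"
  unfolding simple_graph_def by blast
lemma compl_sym: "simple_graph N E \<Longrightarrow> \<forall>x y. compl_graph E x y \<longrightarrow> compl_graph E y x"
  unfolding simple_graph_def compl_graph_def by blast



lemma Tp_from:
  assumes g: "simple_graph N E" and n: "n \<ge> 4" and v: "v < N"
    and u: "u \<in> nb N (compl_graph E) v" and w: "w < N" "compl_graph E u w" "w \<noteq> v"
    and c: "n - 1 \<le> card (nb N (compl_graph E) v)"
  shows "contains N (compl_graph E) n (Tprime n)"
proof -
  let ?C = "nb N (compl_graph E) v"
  define S where "S = ?C - {u, w}"
  have uv: "u < N" "compl_graph E v u" using u unfolding nb_def by auto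
  have d: "distinct [v,u,w]" using uv w unfolding compl_graph_def by auto
  have cS: "n - 3 \<le> card S" unfolding S_def
    using card_diff_ge[of "{u,w}" 2 ?C] card_set_le(1)[of u w] c by simp
  show ?thesis
  proof (rule embed_Tp[OF n compl_sym[OF g] d v uv(1) w(1)])
    show "finite S" unfolding S_def using nb_fin by auto
    show "S \<subseteq> {..<N}" unfolding S_def using nb_sub[of N "compl_graph E" v] by blast
    show "n - 3 \<le> card S" by (rule cS)
    show "v \<notin> S" "u \<notin> S" "w \<notin> S" unfolding S_def nb_def compl_graph_def by auto
    show "compl_graph E v u" "compl_graph E u w" using uv w by auto
    show "\<forall>s\<in>S. compl_graph E v s" unfolding S_def nb_def by auto
  qed
qed

lemma caseA:
  assumes g: "simple_graph N E" and m: "m \<ge> 5" and n: "n \<ge> 4" and N: "N = m + n - 3"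
    and v: "v < N" and c: "n - 1 \<le> card (nb N (compl_graph E) v)"
    and hyp: "\<forall>u\<in>nb N (compl_graph E) v. \<forall>w<N. compl_graph E u w \<longrightarrow> w = v"
  shows "contains N E m (T1 m) \<and> contains N E m (T2 m)"
proof -
  let ?C = "nb N (compl_graph E) v"
  have sym: "\<forall>x y. E x y \<longrightarrow> E y x" using simple_sym[OF g] .
  have uadj: "E u x" if "u \<in> ?C" "x < N" "x \<noteq> u" "x \<noteq> v" for u x
  proof (rule ccontr)
    assume "\<not> E u x"
    then have "compl_graph E u x" using that unfolding compl_graph_def by simp
    then show False using hyp[rule_format, OF that(1) that(2)] that(4) by simp
  qed
  have Cv: "u \<in> ?C \<Longrightarrow> u \<noteq> v \<and> u < N" for u unfolding nb_def compl_graph_def by auto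
  obtain u1 u2 u3 where u: "u1 \<in> ?C" "u2 \<in> ?C" "u3 \<in> ?C" "u1 \<noteq> u2" "u1 \<noteq> u3" "u2 \<noteq> u3"
    using pick3[of ?C] c n by fastforce
  define R where "R = {..<N} - {v,u1,u2,u3}"
  have cR: "N - 4 \<le> card R" unfolding R_def
    using card_diff_ge[of "{v,u1,u2,u3}" 4 "{..<N}"] card_set_le(3)[of v u1 u2 u3] by simp
  then obtain c3 c4 where c34: "c3 \<in> R" "c4 \<in> R" "c3 \<noteq> c4" using pick2[of R] m n N by fastforce
  define S where "S = R - {c3, c4}"
  have cS: "m - 5 \<le> card S" unfolding S_def
    using card_diff_ge[of "{c3,c4}" 2 R] card_set_le(1)[of c3 c4] cR m n N by simp
  have Sfin: "finite S" "S \<subseteq> {..<N}" unfolding S_def R_def by auto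
  have Rp: "x \<in> R \<Longrightarrow> x < N \<and> x \<noteq> v \<and> x \<noteq> u1 \<and> x \<noteq> u2 \<and> x \<noteq> u3" for x unfolding R_def by auto
  have Sp: "x \<in> S \<Longrightarrow> x \<in> R \<and> x \<noteq> c3 \<and> x \<noteq> c4" for x unfolding S_def by auto
  note facts = u Cv[OF u(1)] Cv[OF u(2)] Cv[OF u(3)] Rp[OF c34(1)] Rp[OF c34(2)] c34(3)
  have T1: "contains N E m (T1 m)"
  proof (rule embed_T1[OF m sym, of u1 u2 u3 c3 c4])
    show "distinct [u1, u2, u3, c3, c4]" using facts by auto
    show "u1 < N" "u2 < N" "u3 < N" "c3 < N" "c4 < N" using facts by simp_all
    show "finite S" "S \<subseteq> {..<N}" "m - 5 \<le> card S" using Sfin cS by auto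
    show "u1 \<notin> S" "u2 \<notin> S" "u3 \<notin> S" "c3 \<notin> S" "c4 \<notin> S" using Sp Rp by blast+
    show "E u1 u2" using uadj[OF u(1), of u2] facts by blast
    show "E u1 u3" using uadj[OF u(1), of u3] facts by blast
    show "E u2 c3" using uadj[OF u(2), of c3] facts by blast
    show "E u3 c4" using uadj[OF u(3), of c4] facts by blast
    show "\<forall>s\<in>S. E u1 s"
    proof
      fix s assume "s \<in> S"
      then have "s < N" "s \<noteq> u1" "s \<noteq> v" using Sp Rp by blast+
      then show "E u1 s" using uadj[OF u(1)] by blast
    qed
  qed
  have T2: "contains N E m (T2 m)"
  proof (rule embed_T2[OF m sym, of u1 u3 u2 c3 c4])
    show "distinct [u1, u3, u2, c3, c4]" using facts by auto
    show "u1 < N" "u3 < N" "u2 < N" "c3 < N" "c4 < N" using facts by simp_all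
    show "finite S" "S \<subseteq> {..<N}" "m - 5 \<le> card S" using Sfin cS by auto
    show "u1 \<notin> S" "u3 \<notin> S" "u2 \<notin> S" "c3 \<notin> S" "c4 \<notin> S" using Sp Rp by blast+
    show "E u1 u2" using uadj[OF u(1), of u2] facts by blast
    show "E u1 u3" using uadj[OF u(1), of u3] facts by blast
    show "E u2 c3" using uadj[OF u(2), of c3] facts by blast
    show "E u2 c4" using uadj[OF u(2), of c4] facts by blast
    show "\<forall>s\<in>S. E u1 s"
    proof
      fix s assume "s \<in> S"
      then have "s < N" "s \<noteq> u1" "s \<noteq> v" using Sp Rp by blast+
      then show "E u1 s" using uadj[OF u(1)] by blast
    qed
  qed
  show ?thesis using T1 T2 by blast
qed



lemma caseB1:
  assumes g: "simple_graph N E" and m: "m \<ge> 5"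
    and deg: "\<forall>v<N. m - 2 \<le> card (nb N E v)"
    and xyw: "x < N" "y < N" "w < N" "E x y" "E y w" "w \<noteq> x" "\<not> E x w"
  shows "contains N E m (T1 m) \<and> contains N E m (T2 m)"
proof -
  have sym: "\<forall>x y. E x y \<longrightarrow> E y x" using simple_sym[OF g] .
  have irr: "\<And>a. \<not> E a a" using g unfolding simple_graph_def by blast
  have nbI: "a < N \<Longrightarrow> E v a \<Longrightarrow> a \<in> nb N E v" for v a unfolding nb_def by simp
  have nbD: "a \<in> nb N E v \<Longrightarrow> a < N \<and> E v a" for v a unfolding nb_def by simp
  have dx: "m - 2 \<le> card (nb N E x)" and dy: "m - 2 \<le> card (nb N E y)" using deg xyw by auto
  have xy: "x \<noteq> y" "y \<noteq> w" using xyw irr by auto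
  have T2: "contains N E m (T2 m)"
  proof -
    have "m - 2 - 2 \<le> card (nb N E y - {x, w})"
      using card_diff_ge[of "{x,w}" 2 "nb N E y"] card_set_le(1)[of x w] dy by simp
    then obtain b where b: "b \<in> nb N E y - {x, w}" using pick1[of "nb N E y - {x,w}"] m by fastforce
    have "m - 2 - 2 \<le> card (nb N E x - {y, b})"
      using card_diff_ge[of "{y,b}" 2 "nb N E x"] card_set_le(1)[of y b] dx by simp
    then obtain c1 where c1: "c1 \<in> nb N E x - {y, b}" using pick1[of "nb N E x - {y,b}"] m by fastforce
    define S where "S = nb N E x - {y, b} - {c1}"
    have cS: "m - 5 \<le> card S" unfolding S_def
      using card_Diff_singleton[OF c1] \<open>m - 2 - 2 \<le> card (nb N E x - {y, b})\<close> by simp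
    have bp: "b < N" "E y b" "b \<noteq> x" "b \<noteq> w" using b nbD by auto
    have c1p: "c1 < N" "E x c1" "c1 \<noteq> y" "c1 \<noteq> b" using c1 nbD by auto
    have c1w: "c1 \<noteq> w" using c1p xyw by auto
    have Sp: "s \<in> S \<Longrightarrow> s < N \<and> E x s \<and> s \<noteq> y \<and> s \<noteq> b \<and> s \<noteq> c1" for s
      unfolding S_def using nbD by auto
    show ?thesis
    proof (rule embed_T2[OF m sym, of x c1 y w b])
      show "distinct [x, c1, y, w, b]" using bp c1p c1w xy xyw irr by auto
      show "x < N" "c1 < N" "y < N" "w < N" "b < N" using bp c1p xyw by simp_all
      show "finite S" using nb_fin[of N E x] by (simp add: S_def)
      show "S \<subseteq> {..<N}" using Sp by blast
      show "m - 5 \<le> card S" by (rule cS)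
      show "x \<notin> S" "c1 \<notin> S" "y \<notin> S" "w \<notin> S" "b \<notin> S" using Sp irr xyw by blast+
      show "E x c1" "E x y" "E y w" "E y b" using bp c1p xyw by simp_all
      show "\<forall>s\<in>S. E x s" using Sp by blast
    qed
  qed
  have T1: "contains N E m (T1 m)"
  proof (cases "\<exists>z\<in>nb N E x - {y}. \<exists>b\<in>nb N E z - {x, y, w}. True")
    case True
    then obtain z b where z: "z \<in> nb N E x - {y}" and b: "b \<in> nb N E z - {x, y, w}" by blast
    define S where "S = nb N E x - {y, z, b}"
    have cS: "m - 5 \<le> card S" unfolding S_def
      using card_diff_ge[of "{y,z,b}" 3 "nb N E x"] card_set_le(2)[of y z b] dx by simp
    have zp: "z < N" "E x z" "z \<noteq> y" using z nbD by auto
    have bp: "b < N" "E z b" "b \<noteq> x" "b \<noteq> y" "b \<noteq> w" using b nbD by auto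
    have zw: "z \<noteq> w" using zp xyw by auto
    have Sp: "s \<in> S \<Longrightarrow> s < N \<and> E x s \<and> s \<noteq> y \<and> s \<noteq> z \<and> s \<noteq> b" for s
      unfolding S_def using nbD by auto
    show ?thesis
    proof (rule embed_T1[OF m sym, of x y z w b])
      show "distinct [x, y, z, w, b]" using bp zp zw xy xyw irr by auto
      show "x < N" "y < N" "z < N" "w < N" "b < N" using bp zp xyw by simp_all
      show "finite S" using nb_fin[of N E x] by (simp add: S_def)
      show "S \<subseteq> {..<N}" using Sp by blast
      show "m - 5 \<le> card S" by (rule cS)
      show "x \<notin> S" "y \<notin> S" "z \<notin> S" "w \<notin> S" "b \<notin> S" using Sp irr xyw by blast+
      show "E x y" "E x z" "E y w" "E z b" using bp zp xyw by simp_all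
      show "\<forall>s\<in>S. E x s" using Sp by blast
    qed
  next
    case False
    then have sub: "z \<in> nb N E x - {y} \<Longrightarrow> nb N E z \<subseteq> {x, y, w}" for z by blast
    have "m - 2 - 1 \<le> card (nb N E x - {y})"
      using card_diff_ge[of "{y}" 1 "nb N E x"] dx by simp
    then have "2 \<le> card (nb N E x - {y})" using m by linarith
    then obtain z1 z2 where zz: "z1 \<in> nb N E x - {y}" "z2 \<in> nb N E x - {y}" "z1 \<noteq> z2"
      using pick2[of "nb N E x - {y}"] by blast
    have z2p: "z2 < N" "E x z2" "z2 \<noteq> y" and z1p: "z1 < N" "E x z1" "z1 \<noteq> y" using zz nbD by auto
    have "card (nb N E z2) \<le> 3"
      using card_mono[OF _ sub[OF zz(2)]] card_set_le(2)[of x y w] by fastforce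
    moreover have "m - 2 \<le> card (nb N E z2)" using deg z2p by auto
    ultimately have m5: "m = 5" using m by simp
    have wz2: "E z2 w"
    proof (rule ccontr)
      assume "\<not> E z2 w"
      then have "nb N E z2 \<subseteq> {x, y}" using sub[OF zz(2)] nbD by blast
      then have "card (nb N E z2) \<le> card {x,y}" by (intro card_mono) auto
      then have "card (nb N E z2) \<le> 2" using card_set_le(1)[of x y] by linarith
      then show False using deg z2p m5 by fastforce
    qed
    show ?thesis
    proof (rule embed_T1[OF m sym, of z2 x w z1 y N "{}"])
      show "distinct [z2, x, w, z1, y]" using z1p z2p zz(3) wz2 xy xyw irr by auto
      show "z2 < N" "x < N" "w < N" "z1 < N" "y < N" using z1p z2p xyw by simp_all
      show "finite {}" "{} \<subseteq> {..<N}" "m - 5 \<le> card {}" using m5 by auto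
      show "z2 \<notin> {}" "x \<notin> {}" "w \<notin> {}" "z1 \<notin> {}" "y \<notin> {}" by auto
      show "E z2 x" "E z2 w" "E x z1" "E w y" using z1p z2p wz2 xyw sym by blast+
      show "\<forall>s\<in>{}. E z2 s" by simp
    qed
  qed
  show ?thesis using T1 T2 by blast
qed



lemma caseB2:
  assumes g: "simple_graph N E" and m: "m \<ge> 5"
    and deg: "\<forall>v<N. m - 2 \<le> card (nb N E v)"
    and hyp: "\<forall>x y w. x < N \<and> y < N \<and> w < N \<and> E x y \<and> E y w \<and> w \<noteq> x \<longrightarrow> E x w"
    and ndvd: "\<not> (m - 1) dvd N"
  shows "contains N E m (T1 m) \<and> contains N E m (T2 m)"
proof -
  have sym: "\<forall>x y. E x y \<longrightarrow> E y x" using simple_sym[OF g] .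
  have irr: "\<And>a. \<not> E a a" using g unfolding simple_graph_def by blast
  define K where "K x = insert x (nb N E x)" for x
  have Kfin: "finite (K x)" for x unfolding K_def using nb_fin by auto
  have Ksub: "x < N \<Longrightarrow> K x \<subseteq> {..<N}" for x unfolding K_def using nb_sub by auto
  have Kmem: "a \<in> K x \<longleftrightarrow> a = x \<or> (a < N \<and> E x a)" for a x unfolding K_def nb_def by auto
  have clique: "x < N \<Longrightarrow> a \<in> K x \<Longrightarrow> b \<in> K x \<Longrightarrow> a \<noteq> b \<Longrightarrow> E a b" for x a b
  proof -
    assume x: "x < N" and a: "a \<in> K x" and b: "b \<in> K x" and ab: "a \<noteq> b"
    show "E a b"
    proof (cases "a = x")
      case True then show ?thesis using b ab Kmem by auto
    next
      case False
      then have a': "a < N" "E x a" using a Kmem by auto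
      show ?thesis
      proof (cases "b = x")
        case True then show ?thesis using a' sym by auto
      next
        case False
        then have "b < N" "E x b" using b Kmem by auto
        moreover have "E a x" using sym a' by blast
        ultimately show ?thesis using hyp[rule_format, of a x b] a' x ab by blast
      qed
    qed
  qed
  have cardK: "card (K x) = card (nb N E x) + 1" for x
    unfolding K_def using nb_fin irr by (simp add: nb_def)
  show ?thesis
  proof (cases "\<exists>x<N. m \<le> card (K x)")
    case True
    then obtain x where x: "x < N" "m \<le> card (K x)" by blast
    have cl: "\<forall>a\<in>K x. \<forall>b\<in>K x. a \<noteq> b \<longrightarrow> E a b" using clique[OF x(1)] by blast
    show ?thesis using clique_contains[OF Kfin Ksub[OF x(1)] x(2) cl] T1_irr[OF m] T2_irr[OF m] by blast
  next
    case False
    have ck: "x < N \<Longrightarrow> card (K x) = m - 1" for x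
    proof -
      assume x: "x < N"
      have "\<not> m \<le> card (K x)" using False x by blast
      moreover have "m - 2 \<le> card (nb N E x)" using deg x by blast
      ultimately show ?thesis using cardK[of x] m by linarith
    qed
    have Keq: "x < N \<Longrightarrow> z \<in> K x \<Longrightarrow> K z = K x" for x z
    proof -
      assume x: "x < N" and z: "z \<in> K x"
      show "K z = K x"
      proof (cases "z = x")
        case True then show ?thesis by simp
      next
        case False
        then have zx: "z < N" "E x z" using z Kmem by auto
        show ?thesis
        proof
          show "K z \<subseteq> K x"
          proof
            fix a assume a: "a \<in> K z"
            show "a \<in> K x"
            proof (cases "a = z \<or> a = x")
              case True then show ?thesis using z Kmem by auto
            next
              case False
              then have "a < N" "E z a" using a Kmem by auto
              then have "E x a" using hyp[rule_format, of x z a] zx x False by blast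
              then show ?thesis using \<open>a < N\<close> Kmem by blast
            qed
          qed
        next
          show "K x \<subseteq> K z"
          proof
            fix a assume a: "a \<in> K x"
            show "a \<in> K z"
            proof (cases "a = z \<or> a = x")
              case True then show ?thesis using x zx sym Kmem by auto
            next
              case False
              then have "a < N" using a Kmem by auto
              then show ?thesis using clique[OF x z a] False Kmem by auto
            qed
          qed
        qed
      qed
    qed
    let ?C = "K ` {..<N}"
    have U: "\<Union>?C = {..<N}"
    proof
      show "\<Union>?C \<subseteq> {..<N}" using Ksub by blast
      show "{..<N} \<subseteq> \<Union>?C" using Kmem by blast
    qed
    have part: "(m - 1) * card ?C = card (\<Union>?C)"
    proof (rule card_partition)
      show "finite ?C" by simp
      show "finite (\<Union>?C)" using U by simp
      show "card c = m - 1" if "c \<in> ?C" for c using ck that by auto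
      show "c1 \<inter> c2 = {}" if "c1 \<in> ?C" "c2 \<in> ?C" "c1 \<noteq> c2" for c1 c2
      proof -
        from that
        obtain x1 x2 where xs: "x1 < N" "x2 < N" "c1 = K x1" "c2 = K x2" "K x1 \<noteq> K x2" by auto
        show "c1 \<inter> c2 = {}"
        proof (rule ccontr)
          assume "c1 \<inter> c2 \<noteq> {}"
          then obtain z where z: "z \<in> K x1" "z \<in> K x2" unfolding xs(3,4) by blast
          have "K z = K x1" "K z = K x2" using Keq[OF xs(1) z(1)] Keq[OF xs(2) z(2)] by simp_all
          then show False using xs by simp
        qed
      qed
    qed
    then have "(m - 1) * card ?C = N" using U by simp
    then have "(m - 1) dvd N" by (metis dvd_triv_left)
    then show ?thesis using ndvd by simp
  qed
qed

lemma upper: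
  assumes g: "simple_graph N E" and m: "m \<ge> 5" and n: "n \<ge> 4"
    and dv: "(m - 1) dvd (n - 3)" and N: "N = m + n - 3"
  shows "(contains N E m (T1 m) \<and> contains N E m (T2 m)) \<or> contains N (compl_graph E) n (Tprime n)"
proof (rule disjCI)
  assume nTp: "\<not> contains N (compl_graph E) n (Tprime n)"
  show "contains N E m (T1 m) \<and> contains N E m (T2 m)"
  proof (cases "\<exists>v<N. n - 1 \<le> card (nb N (compl_graph E) v)")
    case True
    then obtain v where v: "v < N" "n - 1 \<le> card (nb N (compl_graph E) v)" by blast
    have hyp: "\<forall>u\<in>nb N (compl_graph E) v. \<forall>w<N. compl_graph E u w \<longrightarrow> w = v"
    proof (intro ballI allI impI)
      fix u w assume u: "u \<in> nb N (compl_graph E) v" and w: "w < N" "compl_graph E u w"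
      show "w = v"
      proof (rule ccontr)
        assume "w \<noteq> v"
        then have "contains N (compl_graph E) n (Tprime n)"
          using Tp_from[OF g n v(1) u w(1) w(2) _ v(2)] by blast
        then show False using nTp by blast
      qed
    qed
    show ?thesis using caseA[OF g m n N v hyp] .
  next
    case False
    have deg: "\<forall>v<N. m - 2 \<le> card (nb N E v)"
    proof (intro allI impI)
      fix v assume v: "v < N"
      have "card (nb N (compl_graph E) v) \<le> n - 2" using False v by fastforce
      then show "m - 2 \<le> card (nb N E v)" using deg_sum[OF g v] N m n by linarith
    qed
    show ?thesis
    proof (cases "\<exists>x y w. x < N \<and> y < N \<and> w < N \<and> E x y \<and> E y w \<and> w \<noteq> x \<and> \<not> E x w")
      case True
      then obtain x y w where xyw: "x < N" "y < N" "w < N" "E x y" "E y w" "w \<noteq> x" "\<not> E x w" by blast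
      show ?thesis using caseB1[OF g m deg xyw] .
    next
      case False
      then have hyp: "\<forall>x y w. x < N \<and> y < N \<and> w < N \<and> E x y \<and> E y w \<and> w \<noteq> x \<longrightarrow> E x w" by blast
      have ndvd: "\<not> (m - 1) dvd N"
      proof
        assume d: "(m - 1) dvd N"
        have "N = ((m - 1) + (n - 3)) + 1" using N m n by simp
        moreover have "(m - 1) dvd ((m - 1) + (n - 3))" using dv by simp
        ultimately have "(m - 1) dvd 1" using d by (metis dvd_add_right_iff)
        then show False using m by simp
      qed
      show ?thesis using caseB2[OF g m deg hyp ndvd] .
    qed
  qed
qed

definition E0 :: "nat \<Rightarrow> nat \<Rightarrow> nat \<Rightarrow> bool" where
  "E0 d x y \<longleftrightarrow> x \<noteq> y \<and> x div d = y div d"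

lemma E0_simple: "simple_graph N (E0 d)"
  unfolding simple_graph_def E0_def by auto

lemma blk: "0 < d \<Longrightarrow> (y div d = q) \<longleftrightarrow> y \<in> {d*q..<d*q+d}" for y d q :: nat
proof
  assume d: "0 < d"
  { assume "y div d = q" then show "y \<in> {d*q..<d*q+d}"
      using times_div_less_eq_dividend[of d y] dividend_less_times_div[OF d, of y] by auto }
  { assume "y \<in> {d*q..<d*q+d}" then show "y div d = q"
      by (intro div_nat_eqI) auto }
qed

lemma lower_T:
  assumes m: "m \<ge> 5" and i: "i \<in> {1,2}"
  shows "\<not> contains N (E0 (m-1)) m (Tmi i m)"
proof
  assume "contains N (E0 (m-1)) m (Tmi i m)"
  then obtain f where f: "inj_on f {..<m}" "\<forall>a<m. \<forall>b<m. Tmi i m a b \<longrightarrow> E0 (m-1) (f a) (f b)"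
    unfolding contains_def by blast
  obtain k where k: "m = k + 5" using m by (metis le_add_diff_inverse2)
  let ?d = "m - 1"
  have bl: "a < m \<Longrightarrow> b < m \<Longrightarrow> Tmi i m a b \<Longrightarrow> f a div ?d = f b div ?d" for a b
    using f(2) unfolding E0_def by blast
  have Tr: "Tmi i m 0 j" if "1 \<le> j" "j \<le> k+2" for j
    using i that unfolding Tmi_def T1_def T2_def edges_rel_def k by auto
  have c1: "j < m \<Longrightarrow> 1 \<le> j \<Longrightarrow> j \<le> k+2 \<Longrightarrow> f j div ?d = f 0 div ?d" for j
  proof -
    assume j: "j < m" "1 \<le> j" "j \<le> k+2"
    have "Tmi i m 0 j" using Tr j by blast
    then show ?thesis using bl[of 0 j] j k by simp
  qed
  have c2: "f (k+3) div ?d = f 0 div ?d \<and> f (k+4) div ?d = f 0 div ?d"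
  proof (cases "i = 1")
    case True
    have "Tmi i m (k+1) (k+3)" "Tmi i m (k+2) (k+4)"
      using True unfolding Tmi_def T1_def edges_rel_def k by auto
    then have "f (k+1) div ?d = f (k+3) div ?d" "f (k+2) div ?d = f (k+4) div ?d"
      using bl[of "k+1" "k+3"] bl[of "k+2" "k+4"] k by simp_all
    moreover have "f (k+1) div ?d = f 0 div ?d" "f (k+2) div ?d = f 0 div ?d"
      using c1[of "k+1"] c1[of "k+2"] k by simp_all
    ultimately show ?thesis by simp
  next
    case False
    have "Tmi i m (k+2) (k+3)" "Tmi i m (k+2) (k+4)"
      using False unfolding Tmi_def T2_def edges_rel_def k by auto
    then have "f (k+2) div ?d = f (k+3) div ?d" "f (k+2) div ?d = f (k+4) div ?d"
      using bl[of "k+2" "k+3"] bl[of "k+2" "k+4"] k by simp_all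
    moreover have "f (k+2) div ?d = f 0 div ?d"
      using c1[of "k+2"] k by simp_all
    ultimately show ?thesis by simp
  qed
  have all: "j < m \<Longrightarrow> f j div ?d = f 0 div ?d" for j
  proof -
    assume j: "j < m"
    then consider "j = 0" | "1 \<le> j \<and> j \<le> k+2" | "j = k+3" | "j = k+4" using k by linarith
    then show ?thesis using c1 c2 j by cases auto
  qed
  have dpos: "0 < ?d" using m by simp
  have "f ` {..<m} \<subseteq> {?d * (f 0 div ?d)..<?d * (f 0 div ?d) + ?d}"
    using all blk[OF dpos] by blast
  then have "card (f ` {..<m}) \<le> ?d"
    using card_mono[of "{?d * (f 0 div ?d)..<?d * (f 0 div ?d) + ?d}"] by fastforce
  moreover have "card (f ` {..<m}) = m" using card_image[OF f(1)] by simp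
  ultimately show False using m by linarith
qed

lemma lower_Tp:
  assumes m: "m \<ge> 5" and n: "n \<ge> 4" and dv: "(m - 1) dvd (n - 3)" and N: "N \<le> m + n - 4"
  shows "\<not> contains N (compl_graph (E0 (m-1))) n (Tprime n)"
proof
  assume "contains N (compl_graph (E0 (m-1))) n (Tprime n)"
  then obtain f where f: "inj_on f {..<n}" "f ` {..<n} \<subseteq> {..<N}"
    "\<forall>a<n. \<forall>b<n. Tprime n a b \<longrightarrow> compl_graph (E0 (m-1)) (f a) (f b)"
    unfolding contains_def by blast
  let ?d = "m - 1"
  obtain k where k: "n - 3 = ?d * k" using dv by blast
  define N' where "N' = ?d * (k + 1)"
  have N': "N' = m + n - 4" unfolding N'_def using k m n by (simp add: algebra_simps)
  have dpos: "0 < ?d" using m by simp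
  define q where "q = f 0 div ?d"
  define B where "B = {?d * q..<?d * q + ?d}"
  have "0 \<in> {..<n}" using n by simp
  then have "f 0 \<in> {..<N}" using f(2) by blast
  then have f0: "f 0 < N'" using N N' by auto
  have "q < k + 1" unfolding q_def using f0 dpos div_less_iff_less_mult[OF dpos] unfolding N'_def
    by (simp add: mult.commute)
  then have "?d * q + ?d \<le> N'"
  proof -
    assume "q < k + 1"
    then have "?d * (q + 1) \<le> ?d * (k + 1)" by (intro mult_le_mono2) simp
    moreover have "?d * (q + 1) = ?d * q + ?d" by (simp only: distrib_left mult_1_right)
    ultimately show ?thesis unfolding N'_def by simp
  qed
  then have Bsub: "B \<subseteq> {..<N'}" unfolding B_def by auto
  have cB: "card B = ?d" unfolding B_def by simp
  have A: "f ` {1..n-2} \<subseteq> {..<N'} - B"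
  proof
    fix y assume "y \<in> f ` {1..n-2}"
    then obtain j where j: "1 \<le> j" "j \<le> n-2" "y = f j" by auto
    have "Tprime n 0 j" using j unfolding Tprime_def edges_rel_def by auto
    then have "compl_graph (E0 ?d) (f 0) (f j)" using f(3) j n by auto
    then have "f j div ?d \<noteq> q" unfolding compl_graph_def E0_def q_def by auto
    then have "y \<notin> B" using blk[OF dpos] j unfolding B_def by blast
    moreover have "j \<in> {..<n}" using j n by simp
    then have "f j \<in> {..<N}" using f(2) by blast
    then have "y < N'" using j N N' by auto
    ultimately show "y \<in> {..<N'} - B" by auto
  qed
  have "card (f ` {1..n-2}) \<le> card ({..<N'} - B)" using card_mono[OF _ A] by simp
  also have "\<dots> = N' - ?d" using card_Diff_subset[OF _ Bsub] cB by (simp add: finite_subset[OF Bsub])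
  also have "\<dots> = n - 3" using N' m n by simp
  finally have c: "card (f ` {1..n-2}) \<le> n - 3" .
  have "inj_on f {1..n-2}" using f(1) by (rule inj_on_subset) (use n in auto)
  then have "card (f ` {1..n-2}) = n - 2" using card_image by fastforce
  then show False using c n by simp
qed

theorem theorem5p2:
  fixes m n i :: nat
  assumes "m \<ge> 5" and "n \<ge> 4" and "(m - 1) dvd (n - 3)" and "i \<in> {1, 2}"
  shows "ramsey_number m (Tmi i m) n (Tprime n) = m + n - 3"
  unfolding ramsey_number_def
proof (rule Least_equality)
  show "0 < m + n - 3 \<and> ramsey_prop m (Tmi i m) n (Tprime n) (m + n - 3)"
  proof
    show "0 < m + n - 3" using assms by simp
    show "ramsey_prop m (Tmi i m) n (Tprime n) (m + n - 3)"
      unfolding ramsey_prop_def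
    proof (intro allI impI)
      fix E assume g: "simple_graph (m + n - 3) E"
      from upper[OF g assms(1-3) refl]
      show "contains (m + n - 3) E m (Tmi i m) \<or> contains (m + n - 3) (compl_graph E) n (Tprime n)"
        unfolding Tmi_def by auto
    qed
  qed
next
  fix y assume y: "0 < y \<and> ramsey_prop m (Tmi i m) n (Tprime n) y"
  show "m + n - 3 \<le> y"
  proof (rule ccontr)
    assume "\<not> m + n - 3 \<le> y"
    then have yl: "y \<le> m + n - 4" by simp
    have "contains y (E0 (m-1)) m (Tmi i m) \<or> contains y (compl_graph (E0 (m-1))) n (Tprime n)"
      using y E0_simple unfolding ramsey_prop_def by blast
    then show False using lower_T[OF assms(1) assms(4)] lower_Tp[OF assms(1-3) yl] by blast
  qed
qed

end
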